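(* Let $l<h$ be constants and $n$ a positive integer, and let $\phi_0,\phi_1,\phi_2,\ldots$ be univariate polynomials (a polynomial basis), with $\phi_i$ used for index $i$. Suppose there is a function $\xi(m)$ such that for every $m$, every $a_0,\ldots,a_m\in\mathbb{R}^d$ and the univariate polynomial $g(t)=\sum_{i=0}^m a_i\phi_i(t)$, $$\|a_i\|\le \xi(m)\max_{l\le t\le h}\|g(t)\|\quad (i=0,\ldots,m).$$ Suppose also there is a function $\zeta(m_1,\ldots,m_n)$ such that for all $\bar a_{i_1,\ldots,i_n}\in\mathbb{R}^d$ ($i_j=0,\ldots,m_j$) and $\bar g(x_1,\ldots,x_n)=\sum_{i_1=0}^{m_1}\cdots\sum_{i_n=0}^{m_n}\bar a_{i_1,\ldots,i_n}\phi_{i_1}(x_1)\cdots\phi_{i_n}(x_n)$, $$\|\bar a_{i_1,\ldots,i_n}\|\le \zeta(m_1,\ldots,m_n)\max_{l\le x_1,\ldots,x_n\le h}\|\bar g(x_1,\ldots,x_n)\|.$$ Then for all $b_{i_1,\ldots,i_{n+1}}\in\mathbb{R}^d$ ($i_j=0,\ldots,m_j$) and $f(x_1,\ldots,x_{n+1})=\sum_{i_1=0}^{m_1}\cdots\sum_{i_{n+1}=0}^{m_{n+1}} b_{i_1,\ldots,i_{n+1}}\phi_{i_1}(x_1)\cdots\phi_{i_{n+1}}(x_{n+1})$, $$\|b_{i_1,\ldots,i_{n+1}}\|\le \zeta(m_1,\ldots,m_n)\,\xi(m_{n+1})\max_{l\le x_1,\ldots,x_{n+1}\le h}\|f(x_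1,\ldots,x_{n+1})\|.$$
   Context: $\|\cdot\|$ denotes a fixed vector norm on $\mathbb{R}^d$ (the paper works with the infinity norm). *)

theory Defs
  imports "HOL-Analysis.Analysis" "HOL-Computational_Algebra.Polynomial"
begin

definition is_vec_norm :: "(real ^ 'd \<Rightarrow> real) \<Rightarrow> bool" where
  "is_vec_norm N \<longleftrightarrow>
     (\<forall>x. 0 \<le> N x) \<and> (\<forall>x. N x = 0 \<longleftrightarrow> x = 0) \<and>
     (\<forall>x y. N (x + y) \<le> N x + N y) \<and> (\<forall>c x. N (c *\<^sub>R x) = \<bar>c\<bar> * N x)"

text \<open>Multi-indices (i_1,...,i_n) are functions on {..<n} (index j stands for variable x_(j+1));
  the degree vector (m_1,...,m_n) is a list ms of length n.\<close>
definition multi_idx :: "nat \<Rightarrow> nat list \<Rightarrow> (nat \<Rightarrow> nat) set" where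
  "multi_idx n ms = PiE {..<n} (\<lambda>j. {..ms ! j})"

definition box :: "nat \<Rightarrow> real \<Rightarrow> real \<Rightarrow> (nat \<Rightarrow> real) set" where
  "box n l h = PiE {..<n} (\<lambda>j. {l..h})"

definition multi_eval :: "(nat \<Rightarrow> real poly) \<Rightarrow> nat \<Rightarrow> nat list \<Rightarrow> ((nat \<Rightarrow> nat) \<Rightarrow> 'v::real_vector)
    \<Rightarrow> (nat \<Rightarrow> real) \<Rightarrow> 'v" where
  "multi_eval phi n ms a x = (\<Sum>i\<in>multi_idx n ms. (\<Prod>j<n. poly (phi (i j)) (x j)) *\<^sub>R a i)"

end

theory Submission
  imports Defs
begin

lemma pos_factor: "0 < a * b \<Longrightarrow> 0 \<le> b \<Longrightarrow> 0 \<le> (a::real)"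
  by (auto simp: zero_less_mult_iff)

lemma vn_sum:
  assumes "is_vec_norm N" "finite A"
  shows "N (\<Sum>i\<in>A. f i) \<le> (\<Sum>i\<in>A. N (f i))"
  using assms(2)
proof (induction A rule: finite_induct)
  case empty
  then show ?case using assms(1) unfolding is_vec_norm_def by (metis order_refl sum.empty)
next
  case (insert x F)
  have "N (f x + sum f F) \<le> N (f x) + N (sum f F)"
    using assms(1) unfolding is_vec_norm_def by blast
  then show ?case using insert by simp
qed

lemma vn_scale: "is_vec_norm N \<Longrightarrow> N (c *\<^sub>R x) = \<bar>c\<bar> * N x"
  unfolding is_vec_norm_def by blast

lemma vn_nonneg: "is_vec_norm N \<Longrightarrow> 0 \<le> N x"
  unfolding is_vec_norm_def by blast

lemma vn_pos: "is_vec_norm N \<Longrightarrow> 0 < N (1::real^'d)"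
proof -
  assume a: "is_vec_norm N"
  have "(1::real^'d) \<noteq> 0" proof
    assume "(1::real^'d) = 0"
    then have "(1::real^'d) $ undefined = 0 $ undefined" by simp
    then show False by simp
  qed
  then show ?thesis using a unfolding is_vec_norm_def by (metis order_le_less)
qed

lemma poly_bounds:
  fixes phi :: "nat \<Rightarrow> real poly"
  obtains B where "\<And>k t. t \<in> {l..h} \<Longrightarrow> \<bar>poly (phi k) t\<bar> \<le> B k"
proof -
  have "\<forall>k. \<exists>b. \<forall>t\<in>{l..h}. \<bar>poly (phi k) t\<bar> \<le> b"
  proof
    fix k
    have "compact ((\<lambda>t. poly (phi k) t) ` {l..h})"
      by (intro compact_continuous_image continuous_intros) auto
    then have "bounded ((\<lambda>t. poly (phi k) t) ` {l..h})" by (rule compact_imp_bounded)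
    then show "\<exists>b. \<forall>t\<in>{l..h}. \<bar>poly (phi k) t\<bar> \<le> b"
      unfolding bounded_iff by auto
  qed
  then obtain B where "\<forall>k. \<forall>t\<in>{l..h}. \<bar>poly (phi k) t\<bar> \<le> B k" by metis
  then show ?thesis using that by blast
qed

lemma bdd_multi:
  assumes "is_vec_norm N"
  shows "bdd_above ((\<lambda>x. N (multi_eval phi n ms (a :: _ \<Rightarrow> real^'d) x)) ` box n l h)"
proof -
  obtain B where B: "\<And>k t. t \<in> {l..h} \<Longrightarrow> \<bar>poly (phi k) t\<bar> \<le> B k"
    using poly_bounds[of l h phi] by metis
  have fin: "finite (multi_idx n ms)" unfolding multi_idx_def by (rule finite_PiE) auto
  show ?thesis unfolding bdd_above_def
  proof (intro exI ballI)
    fix y assume "y \<in> (\<lambda>x. N (multi_eval phi n ms a x)) ` box n l h"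
    then obtain x where x: "x \<in> box n l h" and y: "y = N (multi_eval phi n ms a x)" by (rule imageE)
    have xr: "\<And>j. j < n \<Longrightarrow> x j \<in> {l..h}" using PiE_mem[OF x[unfolded box_def]] by blast
    have "y \<le> (\<Sum>i\<in>multi_idx n ms. N ((\<Prod>j<n. poly (phi (i j)) (x j)) *\<^sub>R a i))"
      unfolding y multi_eval_def by (rule vn_sum[OF assms fin])
    also have "\<dots> \<le> (\<Sum>i\<in>multi_idx n ms. (\<Prod>j<n. B (i j)) * N (a i))"
    proof (rule sum_mono)
      fix i assume "i \<in> multi_idx n ms"
      have "\<bar>\<Prod>j<n. poly (phi (i j)) (x j)\<bar> = (\<Prod>j<n. \<bar>poly (phi (i j)) (x j)\<bar>)"
        by (rule abs_prod)
      also have "\<dots> \<le> (\<Prod>j<n. B (i j))"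
        by (rule prod_mono) (use B xr in auto)
      finally show "N ((\<Prod>j<n. poly (phi (i j)) (x j)) *\<^sub>R a i) \<le> (\<Prod>j<n. B (i j)) * N (a i)"
        using vn_scale[OF assms] vn_nonneg[OF assms] by (simp add: mult_right_mono)
    qed
    finally show "y \<le> (\<Sum>i\<in>multi_idx n ms. (\<Prod>j<n. B (i j)) * N (a i))" .
  qed
qed

lemma bdd_single:
  fixes phi :: "nat \<Rightarrow> real poly"
  assumes "is_vec_norm N"
  shows "bdd_above ((\<lambda>t. N (\<Sum>k\<le>m. poly (phi k) t *\<^sub>R (a k :: real^'d))) ` {l..h})"
proof -
  obtain B where B: "\<And>k t. t \<in> {l..h} \<Longrightarrow> \<bar>poly (phi k) t\<bar> \<le> B k"
    using poly_bounds[of l h phi] by metis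
  show ?thesis unfolding bdd_above_def
  proof (intro exI ballI)
    fix y assume "y \<in> (\<lambda>t. N (\<Sum>k\<le>m. poly (phi k) t *\<^sub>R a k)) ` {l..h}"
    then obtain t where t: "t \<in> {l..h}" and y: "y = N (\<Sum>k\<le>m. poly (phi k) t *\<^sub>R a k)" by (rule imageE)
    have "y \<le> (\<Sum>k\<le>m. N (poly (phi k) t *\<^sub>R a k))"
      unfolding y by (rule vn_sum[OF assms]) simp
    also have "\<dots> \<le> (\<Sum>k\<le>m. B k * N (a k))"
    proof (rule sum_mono)
      fix k assume "k \<in> {..m}"
      have "\<bar>poly (phi k) t\<bar> * N (a k) \<le> B k * N (a k)"
        using B[OF t] vn_nonneg[OF assms] by (rule mult_right_mono)
      then show "N (poly (phi k) t *\<^sub>R a k) \<le> B k * N (a k)"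
        using vn_scale[OF assms] by simp
    qed
    finally show "y \<le> (\<Sum>k\<le>m. B k * N (a k))" .
  qed
qed

lemma sup_nonneg:
  fixes f :: "'a \<Rightarrow> real"
  assumes "bdd_above (f ` A)" "A \<noteq> {}" "\<And>x. x \<in> A \<Longrightarrow> 0 \<le> f x"
  shows "0 \<le> (SUP x\<in>A. f x)"
proof -
  obtain x where "x \<in> A" using assms(2) by auto
  then show ?thesis using assms cSUP_upper[of x A f] by force
qed

lemma decomp:
  assumes "length ms = Suc n"
  shows "multi_eval phi (Suc n) ms b x =
    (\<Sum>k\<le>last ms. poly (phi k) (x n) *\<^sub>R multi_eval phi n (butlast ms) (\<lambda>g. b (g(n := k))) x)"
proof -
  have last: "last ms = ms ! n" using assms by (cases "ms = []") (auto simp: last_conv_nth)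
  have mi: "multi_idx n (butlast ms) = PiE {..<n} (\<lambda>j. {..ms ! j})"
    unfolding multi_idx_def by (intro PiE_cong) (simp add: nth_butlast assms)
  have "multi_idx (Suc n) ms = PiE (insert n {..<n}) (\<lambda>j. {..ms ! j})"
    unfolding multi_idx_def lessThan_Suc by simp
  also have "\<dots> = (\<lambda>(y, g). g(n := y)) ` ({..ms ! n} \<times> PiE {..<n} (\<lambda>j. {..ms ! j}))"
    by (rule PiE_insert_eq)
  finally have eq: "multi_idx (Suc n) ms = (\<lambda>(y, g). g(n := y)) ` ({..ms ! n} \<times> PiE {..<n} (\<lambda>j. {..ms ! j}))" .
  have inj: "inj_on (\<lambda>(y, g). g(n := y)) ({..ms ! n} \<times> PiE {..<n} (\<lambda>j. {..ms ! j}))"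
    using inj_combinator[of n "{..<n}" "\<lambda>j. {..ms ! j}"] by simp
  have prodeq: "(\<Prod>j<Suc n. poly (phi ((g(n := k)) j)) (x j)) =
        poly (phi k) (x n) * (\<Prod>j<n. poly (phi (g j)) (x j))" for g k
    by (simp add: prod.lessThan_Suc)
  have "multi_eval phi (Suc n) ms b x =
     (\<Sum>(k, g)\<in>{..ms ! n} \<times> PiE {..<n} (\<lambda>j. {..ms ! j}).
        (\<Prod>j<Suc n. poly (phi ((g(n := k)) j)) (x j)) *\<^sub>R b (g(n := k)))"
    unfolding multi_eval_def eq by (subst sum.reindex[OF inj]) (simp add: case_prod_unfold)
  also have "\<dots> = (\<Sum>k\<le>ms ! n. \<Sum>g\<in>PiE {..<n} (\<lambda>j. {..ms ! j}).
        (\<Prod>j<Suc n. poly (phi ((g(n := k)) j)) (x j)) *\<^sub>R b (g(n := k)))"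
    by (subst sum.cartesian_product) simp
  also have "\<dots> = (\<Sum>k\<le>ms ! n. poly (phi k) (x n) *\<^sub>R (\<Sum>g\<in>PiE {..<n} (\<lambda>j. {..ms ! j}).
        (\<Prod>j<n. poly (phi (g j)) (x j)) *\<^sub>R b (g(n := k))))"
    by (simp add: prodeq scaleR_sum_right mult.commute)
  finally show ?thesis unfolding multi_eval_def mi last .
qed

theorem lemma1:
  fixes N :: "real ^ 'd \<Rightarrow> real"
    and phi :: "nat \<Rightarrow> real poly"
    and l h :: real and n :: nat
    and xi :: "nat \<Rightarrow> real" and zeta :: "nat list \<Rightarrow> real"
  assumes norm: "is_vec_norm N"
    and lh: "l < h" and npos: "0 < n"
    and hxi: "\<And>(m::nat) (a :: nat \<Rightarrow> real ^ 'd) i. i \<le> m \<Longrightarrow>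
        N (a i) \<le> xi m * (SUP t\<in>{l..h}. N (\<Sum>k\<le>m. poly (phi k) t *\<^sub>R a k))"
    and hzeta: "\<And>ms (a :: (nat \<Rightarrow> nat) \<Rightarrow> real ^ 'd) i. length ms = n \<Longrightarrow> i \<in> multi_idx n ms \<Longrightarrow>
        N (a i) \<le> zeta ms * (SUP x\<in>box n l h. N (multi_eval phi n ms a x))"
  shows "\<And>ms (b :: (nat \<Rightarrow> nat) \<Rightarrow> real ^ 'd) i. length ms = Suc n \<Longrightarrow> i \<in> multi_idx (Suc n) ms \<Longrightarrow>
        N (b i) \<le> zeta (butlast ms) * xi (last ms) *
                  (SUP x\<in>box (Suc n) l h. N (multi_eval phi (Suc n) ms b x))"
proof -
  fix ms and b :: "(nat \<Rightarrow> nat) \<Rightarrow> real ^ 'd" and i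
  assume len: "length ms = Suc n" and i: "i \<in> multi_idx (Suc n) ms"
  define ms' where "ms' = butlast ms"
  define m where "m = last ms"
  have len': "length ms' = n" using len by (simp add: ms'_def)
  define S where "S = (SUP x\<in>box (Suc n) l h. N (multi_eval phi (Suc n) ms b x))"
  have boxne: "box k l h \<noteq> {}" for k
    unfolding box_def using lh by (simp add: PiE_eq_empty_iff)
  have bddS: "bdd_above ((\<lambda>x. N (multi_eval phi (Suc n) ms b x)) ` box (Suc n) l h)"
    by (rule bdd_multi[OF norm])
  have xi_nn: "0 \<le> xi k" for k
  proof -
    let ?a = "\<lambda>_::nat. 1 :: real^'d"
    have "0 < N (?a k)" by (rule vn_pos[OF norm])
    also have "\<dots> \<le> xi k * (SUP t\<in>{l..h}. N (\<Sum>j\<le>k. poly (phi j) t *\<^sub>R ?a j))"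
      by (rule hxi[where i=k and m=k and a="?a", simplified])
    finally have p: "0 < xi k * (SUP t\<in>{l..h}. N (\<Sum>j\<le>k. poly (phi j) t *\<^sub>R ?a j))" .
    have "0 \<le> (SUP t\<in>{l..h}. N (\<Sum>j\<le>k. poly (phi j) t *\<^sub>R ?a j))"
      by (rule sup_nonneg[OF bdd_single[OF norm]]) (use lh vn_nonneg[OF norm] in auto)
    then show ?thesis using pos_factor[OF p] by blast
  qed
  have zeta_nn: "0 \<le> zeta ms'"
  proof -
    let ?a = "\<lambda>_::nat\<Rightarrow>nat. 1 :: real^'d"
    have im: "restrict (\<lambda>_. 0) {..<n} \<in> multi_idx n ms'" unfolding multi_idx_def by auto
    have "0 < N (?a undefined)" by (rule vn_pos[OF norm])
    also have "\<dots> \<le> zeta ms' * (SUP x\<in>box n l h. N (multi_eval phi n ms' ?a x))"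
      by (rule hzeta[where ms="ms'" and a="?a", OF len' im])
    finally have p: "0 < zeta ms' * (SUP x\<in>box n l h. N (multi_eval phi n ms' ?a x))" .
    have "0 \<le> (SUP x\<in>box n l h. N (multi_eval phi n ms' ?a x))"
      by (rule sup_nonneg[OF bdd_multi[OF norm] boxne]) (use vn_nonneg[OF norm] in auto)
    then show ?thesis using pos_factor[OF p] by blast
  qed
  define c where "c = (\<lambda>k x. multi_eval phi n ms' (\<lambda>g. b (g(n := k))) x)"
  have step1: "N (c k x) \<le> xi m * S" if x: "x \<in> box n l h" and k: "k \<le> m" for k x
  proof -
    have "N (c k x) \<le> xi m * (SUP t\<in>{l..h}. N (\<Sum>j\<le>m. poly (phi j) t *\<^sub>R c j x))"
      using hxi[where i=k and m=m and a="\<lambda>j. c j x", OF k] by simp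
    also have "(SUP t\<in>{l..h}. N (\<Sum>j\<le>m. poly (phi j) t *\<^sub>R c j x)) \<le> S"
      unfolding S_def
    proof (rule cSUP_least)
      show "{l..h} \<noteq> {}" using lh by simp
      fix t assume t: "t \<in> {l..h}"
      have xt: "x(n := t) \<in> box (Suc n) l h"
        using PiE_fun_upd[of t "\<lambda>j. {l..h}" n x "{..<n}"] x t unfolding box_def lessThan_Suc by simp
      have "multi_eval phi (Suc n) ms b (x(n := t)) = (\<Sum>j\<le>m. poly (phi j) t *\<^sub>R c j x)"
      proof -
        have "multi_eval phi n ms' (\<lambda>g. b (g(n := j))) (x(n := t)) = c j x" for j
          unfolding c_def multi_eval_def by (intro sum.cong refl arg_cong2[where f=scaleR] prod.cong) auto
        then show ?thesis using decomp[OF len, of phi b "x(n := t)"]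
          by (simp add: m_def ms'_def)
      qed
      then show "N (\<Sum>j\<le>m. poly (phi j) t *\<^sub>R c j x) \<le> (SUP x\<in>box (Suc n) l h. N (multi_eval phi (Suc n) ms b x))"
        using cSUP_upper[OF xt bddS] by simp
    qed
    then have "xi m * (SUP t\<in>{l..h}. N (\<Sum>j\<le>m. poly (phi j) t *\<^sub>R c j x)) \<le> xi m * S"
      using xi_nn by (rule mult_left_mono)
    finally show ?thesis .
  qed
  define i' where "i' = restrict i {..<n}"
  have iPi: "i \<in> PiE {..<Suc n} (\<lambda>j. {..ms ! j})" using i unfolding multi_idx_def .
  have last_eq: "last ms = ms ! n" using len by (cases "ms = []") (auto simp: last_conv_nth)
  have im: "i' \<in> multi_idx n ms'"
    unfolding i'_def multi_idx_def restrict_PiE_iff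
  proof
    fix j assume j: "j \<in> {..<n}"
    then have "i j \<in> {..ms ! j}" using PiE_mem[OF iPi, of j] by simp
    moreover have "ms' ! j = ms ! j" using j len unfolding ms'_def by (simp add: nth_butlast)
    ultimately show "i j \<in> {..ms' ! j}" by simp
  qed
  have ii: "i'(n := i n) = i"
  proof
    fix j show "(i'(n := i n)) j = i j"
    proof (cases "j < n")
      case True then show ?thesis by (simp add: i'_def)
    next
      case False
      show ?thesis
      proof (cases "j = n")
        case True then show ?thesis by simp
      next
        case False
        with \<open>\<not> j < n\<close> have "j \<notin> {..<Suc n}" by simp
        then have "i j = undefined" using PiE_arb[OF iPi] by blast
        then show ?thesis using False \<open>\<not> j < n\<close> by (simp add: i'_def)
      qed
    qed
  qed
  have km: "i n \<le> m" using PiE_mem[OF iPi, of n] unfolding m_def last_eq by simp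
  have "N (b i) = N ((\<lambda>g. b (g(n := i n))) i')" by (simp add: ii)
  also have "\<dots> \<le> zeta ms' * (SUP x\<in>box n l h. N (c (i n) x))"
    unfolding c_def using hzeta[where ms="ms'" and a="\<lambda>g. b (g(n := i n))" and i="i'", OF len' im] by simp
  also have "\<dots> \<le> zeta ms' * (xi m * S)"
  proof (rule mult_left_mono[OF _ zeta_nn])
    show "(SUP x\<in>box n l h. N (c (i n) x)) \<le> xi m * S"
      by (rule cSUP_least[OF boxne]) (rule step1[OF _ km])
  qed
  finally show "N (b i) \<le> zeta (butlast ms) * xi (last ms) * S"
    by (simp add: ms'_def m_def mult.assoc)
qed

end
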